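(* Let $(\mathcal{S},d_{\mathcal{S}})$ be a metric state space and $\mathcal{A}$ an action set. Let $(F,g)$ be a Lipschitz model class with constant $K_F$ and let $\widehat T$ be its generalized transition function. Then $$K^{\mathcal{A}}_{W,W}(\widehat T):=\sup_{a\in\mathcal{A}}\sup_{\mu_1,\mu_2}\frac{W\big(\widehat T(\cdot\mid\mu_1,a),\widehat T(\cdot\mid\mu_2,a)\big)}{W(\mu_1,\mu_2)}\le K_F,$$ where the supremum is over probability distributions $\mu_1\ne\mu_2$ on $\mathcal{S}$.
   Context: A Lipschitz model class is a collection $F$ of functions $f:\mathcal{S}\to\mathcal{S}$ together with, for each $a\in\mathcal{A}$, a probability distribution $g(\cdot\mid a)$ over $F$ (independent of the state), such that $K_F:=\sup_{f\in F}\sup_{s_1\ne s_2}\frac{d_{\mathcal{S}}(f(s_1),f(s_2))}{d_{\mathcal{S}}(s_1,s_2)}<\infty$. Its induced transition is $\widehat T(s'\mid s,a)=\sum_f\mathbb{1}(f(s)=s')g(f\mid a)$ and its generalized transition on a distribution $\mu$ is $\widehat T(s'\mid\mu,a)=\int\widehat T(s'\mid s,a)\mu(s)\,ds$. $W$ is the first Wasserstein metric: $W(\mu_1,\mu_2)=\inf_j\iint j(s_1,s_2)d_{\mathcal{S}}(s_1,s_2)$ over couplings $j$ of $\mu_1,\mu_2$. *)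

theory Defs
  imports "HOL-Probability.Probability"
begin

definition prob_distr :: "'a::metric_space measure \<Rightarrow> bool" where
  "prob_distr \<mu> \<longleftrightarrow> prob_space \<mu> \<and> sets \<mu> = sets borel"

definition couplings :: "'a::metric_space measure \<Rightarrow> 'a measure \<Rightarrow> ('a \<times> 'a) measure set" where
  "couplings \<mu>1 \<mu>2 = {j. prob_space j \<and> sets j = sets borel \<and>
      distr j borel fst = \<mu>1 \<and> distr j borel snd = \<mu>2}"

definition wasserstein :: "'a::metric_space measure \<Rightarrow> 'a measure \<Rightarrow> ennreal" where
  "wasserstein \<mu>1 \<mu>2 =
     (INF j \<in> couplings \<mu>1 \<mu>2. \<integral>\<^sup>+ p. ennreal (dist (fst p) (snd p)) \<partial>j)"

definition lip_ratios :: "('a::metric_space \<Rightarrow> 'a) set \<Rightarrow> real set" where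
  "lip_ratios F = {dist (f s1) (f s2) / dist s1 s2 | f s1 s2. f \<in> F \<and> s1 \<noteq> s2}"

definition K_F :: "('a::metric_space \<Rightarrow> 'a) set \<Rightarrow> real" where
  "K_F F = Sup (lip_ratios F)"

definition lipschitz_model_class ::
    "('a::metric_space \<Rightarrow> 'a) set \<Rightarrow> ('b \<Rightarrow> ('a \<Rightarrow> 'a) pmf) \<Rightarrow> bool" where
  "lipschitz_model_class F g \<longleftrightarrow> (\<forall>a. set_pmf (g a) \<subseteq> F) \<and> bdd_above (lip_ratios F)"

text \<open>Generalized transition: T(. | mu, a) = sum_f g(f|a) * (pushforward of mu by f).\<close>
definition gen_trans ::
    "('b \<Rightarrow> ('a::metric_space \<Rightarrow> 'a) pmf) \<Rightarrow> 'a measure \<Rightarrow> 'b \<Rightarrow> 'a measure" where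
  "gen_trans g \<mu> a = bind (measure_pmf (g a)) (\<lambda>f. distr \<mu> borel f)"

end

theory Submission
  imports Defs
begin

lemma distr_subprob_any:
  assumes "subprob_space M" "space N \<noteq> {}"
  shows "distr M N f \<in> space (subprob_algebra N)"
proof -
  have "emeasure (distr M N f) (space N) \<le> 1"
    unfolding distr_def emeasure_measure_of_conv
    using subprob_space.subprob_emeasure_le_1[OF assms(1)] by auto
  then show ?thesis using assms(2) by (auto simp: space_subprob_algebra intro!: subprob_spaceI)
qed

lemma lip_bound:
  assumes "lipschitz_model_class F g" "f \<in> F"
  shows "dist (f x) (f y) \<le> K_F F * dist x y"
proof (cases "x = y")
  case False
  have "dist (f x) (f y) / dist x y \<in> lip_ratios F" using False assms(2) unfolding lip_ratios_def by blast
  then have "dist (f x) (f y) / dist x y \<le> K_F F" unfolding K_F_def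
    using assms(1) unfolding lipschitz_model_class_def by (intro cSup_upper) auto
  then show ?thesis using False by (simp add: divide_le_eq mult.commute)
qed simp

lemma lip_cont:
  fixes F :: "('a::metric_space \<Rightarrow> 'a) set"
  assumes "lipschitz_model_class F g" "f \<in> F"
  shows "continuous_on UNIV f"
proof -
  have "(max (K_F F) 0)-lipschitz_on UNIV f"
  proof (rule lipschitz_onI)
    fix x y :: 'a
    have "K_F F * dist x y \<le> max (K_F F) 0 * dist x y" by (intro mult_right_mono) auto
    then show "dist (f x) (f y) \<le> max (K_F F) 0 * dist x y" using lip_bound[OF assms, of x y] by linarith
  qed auto
  then show ?thesis by (intro lipschitz_on_continuous_on)
qed

lemma W_self:
  fixes \<nu> :: "'a::metric_space measure"
  assumes "prob_space \<nu>" "sets \<nu> = sets borel"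
  shows "wasserstein \<nu> \<nu> = 0"
proof -
  have mN: "measurable \<nu> N = measurable borel N" for N :: "'c measure"
    using assms(2) by (rule measurable_cong_sets) auto
  have dm: "(\<lambda>x::'a. (x, x)) \<in> borel_measurable borel"
    by (intro borel_measurable_continuous_onI continuous_intros)
  have fm: "(fst :: 'a \<times> 'a \<Rightarrow> 'a) \<in> borel_measurable borel"
    by (intro borel_measurable_continuous_onI continuous_intros)
  have sm: "(snd :: 'a \<times> 'a \<Rightarrow> 'a) \<in> borel_measurable borel"
    by (intro borel_measurable_continuous_onI continuous_intros)
  have dim: "(\<lambda>p::'a\<times>'a. ennreal (dist (fst p) (snd p))) \<in> borel_measurable borel"
    by (intro measurable_compose[OF _ measurable_ennreal] borel_measurable_continuous_onI continuous_intros)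
  define j where "j = distr \<nu> borel (\<lambda>x::'a. (x, x))"
  have "j \<in> couplings \<nu> \<nu>"
    unfolding couplings_def j_def
  proof (intro CollectI conjI)
    show "prob_space (distr \<nu> borel (\<lambda>x. (x, x)))"
      by (rule prob_space.prob_space_distr[OF assms(1)]) (simp add: mN dm)
    show "distr (distr \<nu> borel (\<lambda>x. (x, x))) borel fst = \<nu>"
      using dm fm by (subst distr_distr) (auto simp: mN comp_def intro: distr_id2[OF assms(2)[symmetric]])
    show "distr (distr \<nu> borel (\<lambda>x. (x, x))) borel snd = \<nu>"
      using dm sm by (subst distr_distr) (auto simp: mN comp_def intro: distr_id2[OF assms(2)[symmetric]])
  qed simp
  then have "wasserstein \<nu> \<nu> \<le> (\<integral>\<^sup>+ p. ennreal (dist (fst p) (snd p)) \<partial>j)"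
    unfolding wasserstein_def by (rule INF_lower)
  moreover have "(\<integral>\<^sup>+ p. ennreal (dist (fst p) (snd p)) \<partial>j) = 0"
    unfolding j_def using dm dim by (subst nn_integral_distr) (auto simp: mN)
  ultimately have "wasserstein \<nu> \<nu> \<le> 0" by simp
  then show ?thesis by simp
qed

lemma gen_trans_prob:
  fixes F :: "('a::metric_space \<Rightarrow> 'a) set"
  assumes L: "lipschitz_model_class F g" and P: "prob_distr \<mu>"
  shows "prob_space (gen_trans g \<mu> a) \<and> sets (gen_trans g \<mu> a) = sets borel"
proof -
  have p: "prob_space \<mu>" and s: "sets \<mu> = sets borel" using P unfolding prob_distr_def by auto
  have mN: "measurable \<mu> N = measurable borel N" for N :: "'c measure"
    using s by (rule measurable_cong_sets) auto
  have Nm: "(\<lambda>f. distr \<mu> borel f) \<in> measurable (measure_pmf (g a)) (subprob_algebra borel)"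
    using distr_subprob_any[OF prob_space_imp_subprob_space[OF p], of borel] by (auto simp: Pi_iff)
  have "prob_space (gen_trans g \<mu> a)"
    unfolding gen_trans_def
  proof (rule prob_space.prob_space_bind[OF _ _ Nm])
    show "prob_space (measure_pmf (g a))" by (rule prob_space_measure_pmf)
    show "AE f in measure_pmf (g a). prob_space (distr \<mu> borel f)"
    proof (rule AE_pmfI)
      fix f assume "f \<in> set_pmf (g a)"
      then have "f \<in> F" using L unfolding lipschitz_model_class_def by auto
      then have "f \<in> borel_measurable borel" using lip_cont[OF L] borel_measurable_continuous_onI by blast
      then show "prob_space (distr \<mu> borel f)"
        by (intro prob_space.prob_space_distr[OF p]) (simp add: mN)
    qed
  qed
  moreover have "sets (gen_trans g \<mu> a) = sets borel"
    unfolding gen_trans_def by (rule sets_bind) auto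
  ultimately show ?thesis by blast
qed

theorem lemma1:
  fixes F :: "('a::metric_space \<Rightarrow> 'a) set"
    and g :: "'b \<Rightarrow> ('a \<Rightarrow> 'a) pmf"
    and \<mu>1 \<mu>2 :: "'a measure"
    and a :: 'b
  assumes "lipschitz_model_class F g"
    and "prob_distr \<mu>1" and "prob_distr \<mu>2" and "\<mu>1 \<noteq> \<mu>2"
  shows "wasserstein (gen_trans g \<mu>1 a) (gen_trans g \<mu>2 a)
           \<le> ennreal (K_F F) * wasserstein \<mu>1 \<mu>2"
proof -
  note L = assms(1)
  have p1: "prob_space \<mu>1" and s1: "sets \<mu>1 = sets borel" using assms(2) unfolding prob_distr_def by auto
  have p2: "prob_space \<mu>2" and s2: "sets \<mu>2 = sets borel" using assms(3) unfolding prob_distr_def by auto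
  have inF: "f \<in> F" if "f \<in> set_pmf (g a)" for f
    using L that unfolding lipschitz_model_class_def by auto
  have fmeas: "f \<in> borel_measurable borel" if "f \<in> set_pmf (g a)" for f
    using lip_cont[OF L inF[OF that]] borel_measurable_continuous_onI by blast
  have Nm: "(\<lambda>f. distr \<mu> borel f) \<in> measurable (measure_pmf (g a)) (subprob_algebra borel)"
    if "prob_space \<mu>" for \<mu> :: "'a measure"
    using distr_subprob_any[OF prob_space_imp_subprob_space[OF that], of borel] by (auto simp: Pi_iff)
  obtain T1 T2 where T1: "prob_space T1" "sets T1 = sets borel" "T1 = gen_trans g \<mu>1 a"
    and T2: "prob_space T2" "sets T2 = sets borel" "T2 = gen_trans g \<mu>2 a"
    using gen_trans_prob[OF L assms(2)] gen_trans_prob[OF L assms(3)] by blast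
  show ?thesis
  proof (cases "K_F F \<le> 0")
    case True
    have const: "f x = f y" if "f \<in> set_pmf (g a)" for f x y
    proof -
      have "dist (f x) (f y) \<le> K_F F * dist x y" using lip_bound[OF L inF[OF that]] .
      also have "\<dots> \<le> 0" using True by (simp add: mult_nonpos_nonneg)
      finally show ?thesis by simp
    qed
    have dc: "distr \<mu> borel f = return borel (f undefined)" if "prob_space \<mu>" "f \<in> set_pmf (g a)"
      for \<mu> :: "'a measure" and f
    proof -
      have "f = (\<lambda>_. f undefined)" using const[OF that(2)] by auto
      then have "distr \<mu> borel f = distr \<mu> borel (\<lambda>_. f undefined)" by simp
      also have "\<dots> = return borel (f undefined)" by (rule prob_space.distr_const[OF that(1)]) simp
      finally show ?thesis .
    qed
    have "gen_trans g \<mu>1 a = gen_trans g \<mu>2 a"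
      unfolding gen_trans_def
      by (rule bind_cong_AE[OF refl Nm[OF p1] Nm[OF p2]]) (auto intro!: AE_pmfI simp: dc[OF p1] dc[OF p2])
    then have "wasserstein (gen_trans g \<mu>1 a) (gen_trans g \<mu>2 a) = 0"
      using W_self[OF T2(1,2)] T2(3) by simp
    then show ?thesis by simp
  next
    case False
    then have Kpos: "K_F F > 0" by simp
    define K where "K = K_F F"
    have key: "wasserstein (gen_trans g \<mu>1 a) (gen_trans g \<mu>2 a)
               \<le> ennreal K * (\<integral>\<^sup>+ p. ennreal (dist (fst p) (snd p)) \<partial>j)"
      if j: "j \<in> couplings \<mu>1 \<mu>2" for j
    proof -
      have pj: "prob_space j" and sj: "sets j = sets borel"
        and m1: "distr j borel fst = \<mu>1" and m2: "distr j borel snd = \<mu>2"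
        using j unfolding couplings_def by auto
      have mj: "measurable j N = measurable borel N" for N :: "'c measure"
        using sj by (rule measurable_cong_sets) auto
      define h where "h f = (\<lambda>p::'a\<times>'a. (f (fst p), f (snd p)))" for f :: "'a \<Rightarrow> 'a"
      have hm: "h f \<in> borel_measurable borel" if "f \<in> set_pmf (g a)" for f
      proof -
        have c: "continuous_on UNIV f" using lip_cont[OF L inF[OF that]] .
        have "continuous_on UNIV (h f)" unfolding h_def
          by (intro continuous_on_Pair continuous_on_compose2[OF c] continuous_intros) auto
        then show ?thesis by (rule borel_measurable_continuous_onI)
      qed
      have fm: "(fst :: 'a \<times> 'a \<Rightarrow> 'a) \<in> borel_measurable borel"
        by (intro borel_measurable_continuous_onI continuous_intros)
      have sm: "(snd :: 'a \<times> 'a \<Rightarrow> 'a) \<in> borel_measurable borel"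
        by (intro borel_measurable_continuous_onI continuous_intros)
      have dim: "(\<lambda>p::'a\<times>'a. ennreal (dist (fst p) (snd p))) \<in> borel_measurable borel"
        by (intro measurable_compose[OF _ measurable_ennreal] borel_measurable_continuous_onI continuous_intros)
      define J where "J = measure_pmf (g a) \<bind> (\<lambda>f. distr j borel (h f))"
      have NJ: "(\<lambda>f. distr j borel (h f)) \<in> measurable (measure_pmf (g a)) (subprob_algebra borel)"
        using distr_subprob_any[OF prob_space_imp_subprob_space[OF pj], of borel] by (auto simp: Pi_iff)
      have pJ: "prob_space J" unfolding J_def
      proof (rule prob_space.prob_space_bind[OF prob_space_measure_pmf _ NJ])
        show "AE f in measure_pmf (g a). prob_space (distr j borel (h f))"
          by (rule AE_pmfI, rule prob_space.prob_space_distr[OF pj]) (simp add: mj hm)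
      qed
      have sJ: "sets J = sets borel" unfolding J_def by (rule sets_bind) auto
      have marg: "distr J borel pr = measure_pmf (g a) \<bind> (\<lambda>f. distr \<mu> borel f)"
        if prm: "pr \<in> borel_measurable borel" and prh: "\<And>f. pr \<circ> h f = f \<circ> pr"
          and mu: "distr j borel pr = \<mu>" "prob_space \<mu>"
        for pr :: "'a \<times> 'a \<Rightarrow> 'a" and \<mu>
      proof -
        have "distr J borel pr = measure_pmf (g a) \<bind> (\<lambda>f. distr (distr j borel (h f)) borel pr)"
          unfolding J_def by (rule distr_bind[OF NJ _ prm]) simp
        also have "\<dots> = measure_pmf (g a) \<bind> (\<lambda>f. distr \<mu> borel f)"
        proof (rule bind_cong_AE[OF refl _ Nm[OF mu(2)]])
          show "(\<lambda>f. distr (distr j borel (h f)) borel pr) \<in> measurable (measure_pmf (g a)) (subprob_algebra borel)"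
            using distr_subprob_any[OF prob_space_imp_subprob_space[OF pj], of borel]
              distr_subprob_any[of _ borel] by (simp add: space_subprob_algebra Pi_iff) blast
          show "AE f in measure_pmf (g a). distr (distr j borel (h f)) borel pr = distr \<mu> borel f"
          proof (rule AE_pmfI)
            fix f assume f: "f \<in> set_pmf (g a)"
            have "distr (distr j borel (h f)) borel pr = distr j borel (pr \<circ> h f)"
              using prm hm[OF f] by (subst distr_distr) (auto simp: mj)
            also have "\<dots> = distr j borel (f \<circ> pr)" by (simp add: prh)
            also have "\<dots> = distr (distr j borel pr) borel f"
              using prm fmeas[OF f] by (subst distr_distr) (auto simp: mj)
            finally show "distr (distr j borel (h f)) borel pr = distr \<mu> borel f" using mu(1) by simp
          qed
        qed
        finally show ?thesis .
      qed
      have "J \<in> couplings (gen_trans g \<mu>1 a) (gen_trans g \<mu>2 a)"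
        unfolding couplings_def
      proof (intro CollectI conjI pJ sJ)
        show "distr J borel fst = gen_trans g \<mu>1 a"
          unfolding gen_trans_def by (rule marg[OF fm _ m1 p1]) (auto simp: h_def)
        show "distr J borel snd = gen_trans g \<mu>2 a"
          unfolding gen_trans_def by (rule marg[OF sm _ m2 p2]) (auto simp: h_def)
      qed
      then have "wasserstein (gen_trans g \<mu>1 a) (gen_trans g \<mu>2 a)
                 \<le> (\<integral>\<^sup>+ p. ennreal (dist (fst p) (snd p)) \<partial>J)"
        unfolding wasserstein_def by (rule INF_lower)
      also have "\<dots> = (\<integral>\<^sup>+ f. (\<integral>\<^sup>+ p. ennreal (dist (fst p) (snd p)) \<partial>distr j borel (h f)) \<partial>measure_pmf (g a))"
        unfolding J_def by (rule nn_integral_bind[OF dim NJ])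
      also have "\<dots> \<le> (\<integral>\<^sup>+ f. ennreal K * (\<integral>\<^sup>+ p. ennreal (dist (fst p) (snd p)) \<partial>j) \<partial>measure_pmf (g a))"
      proof (rule nn_integral_mono_AE, rule AE_pmfI)
        fix f assume f: "f \<in> set_pmf (g a)"
        have "(\<integral>\<^sup>+ p. ennreal (dist (fst p) (snd p)) \<partial>distr j borel (h f))
              = (\<integral>\<^sup>+ p. ennreal (dist (f (fst p)) (f (snd p))) \<partial>j)"
          using hm[OF f] dim by (subst nn_integral_distr) (auto simp: mj h_def)
        also have "\<dots> \<le> (\<integral>\<^sup>+ p. ennreal K * ennreal (dist (fst p) (snd p)) \<partial>j)"
        proof (rule nn_integral_mono)
          fix p :: "'a \<times> 'a"
          have "ennreal (dist (f (fst p)) (f (snd p))) \<le> ennreal (K * dist (fst p) (snd p))"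
            using lip_bound[OF L inF[OF f]] unfolding K_def by (intro ennreal_leI) auto
          also have "\<dots> = ennreal K * ennreal (dist (fst p) (snd p))"
            using Kpos unfolding K_def by (simp add: ennreal_mult)
          finally show "ennreal (dist (f (fst p)) (f (snd p))) \<le> ennreal K * ennreal (dist (fst p) (snd p))" .
        qed
        also have "\<dots> = ennreal K * (\<integral>\<^sup>+ p. ennreal (dist (fst p) (snd p)) \<partial>j)"
          using dim by (subst nn_integral_cmult) (auto simp: mj)
        finally show "(\<integral>\<^sup>+ p. ennreal (dist (fst p) (snd p)) \<partial>distr j borel (h f))
              \<le> ennreal K * (\<integral>\<^sup>+ p. ennreal (dist (fst p) (snd p)) \<partial>j)" .
      qed
      also have "\<dots> = ennreal K * (\<integral>\<^sup>+ p. ennreal (dist (fst p) (snd p)) \<partial>j)"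
        by (simp add: measure_pmf.emeasure_space_1)
      finally show ?thesis .
    qed
    define c where "c = ennreal (1 / K)"
    have cK: "c * ennreal K = 1"
      using Kpos unfolding c_def K_def by (simp add: ennreal_mult[symmetric])
    have "c * wasserstein (gen_trans g \<mu>1 a) (gen_trans g \<mu>2 a) \<le> wasserstein \<mu>1 \<mu>2"
      unfolding wasserstein_def[of \<mu>1]
    proof (rule INF_greatest)
      fix j assume "j \<in> couplings \<mu>1 \<mu>2"
      then have "c * wasserstein (gen_trans g \<mu>1 a) (gen_trans g \<mu>2 a)
            \<le> c * (ennreal K * (\<integral>\<^sup>+ p. ennreal (dist (fst p) (snd p)) \<partial>j))"
        by (intro mult_left_mono key) auto
      also have "\<dots> = (\<integral>\<^sup>+ p. ennreal (dist (fst p) (snd p)) \<partial>j)"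
        by (simp add: mult.assoc[symmetric] cK)
      finally show "c * wasserstein (gen_trans g \<mu>1 a) (gen_trans g \<mu>2 a)
            \<le> (\<integral>\<^sup>+ p. ennreal (dist (fst p) (snd p)) \<partial>j)" .
    qed
    then have "ennreal K * (c * wasserstein (gen_trans g \<mu>1 a) (gen_trans g \<mu>2 a))
               \<le> ennreal K * wasserstein \<mu>1 \<mu>2"
      by (intro mult_left_mono) auto
    moreover have "ennreal K * (c * wasserstein (gen_trans g \<mu>1 a) (gen_trans g \<mu>2 a))
               = wasserstein (gen_trans g \<mu>1 a) (gen_trans g \<mu>2 a)"
      by (simp add: mult.assoc[symmetric] cK mult.commute[of "ennreal K" c])
    ultimately show ?thesis by (simp add: K_def)
  qed
qed

end
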